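(* Let $\alpha>0$ be such that $d_{g,\alpha}(p,q)=\|p^{-1}\cdot q\|_{g,\alpha}$ is a distance on $\mathbb H$ (in particular for any $0<\alpha\le 2$), where $\|(x,y,z)\|_{g,\alpha}=\big((x^2+y^2)^2+4\alpha^2z^2\big)^{1/4}$. Then BCP does not hold for $d_{g,\alpha}$ on $\mathbb H$. In particular BCP fails for the Cygan–Korányi distance $d_{g,2}$.
   Context: $\mathbb H=\mathbb R^3$ with group law $(x,y,z)\cdot(x',y',z')=(x+x',y+y',z+z'+\tfrac12(xy'-yx'))$. BCP holds for $d$ if there is $N\geq1$ such that for every bounded $A$ and every family $\mathcal B$ of closed balls with each point of $A$ the center of some ball of $\mathcal B$, some subfamily $\mathcal F\subset\mathcal B$ satisfies $\chi_A\le\sum_{B\in\mathcal F}\chi_B\le N$. *)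

theory Defs
  imports "HOL-Analysis.Analysis"
begin

type_synonym heis = "real \<times> real \<times> real"

definition hmult :: "heis \<Rightarrow> heis \<Rightarrow> heis" where
  "hmult p q = (case p of (x, y, z) \<Rightarrow> case q of (x', y', z') \<Rightarrow>
      (x + x', y + y', z + z' + (x * y' - y * x') / 2))"

definition hinv :: "heis \<Rightarrow> heis" where
  "hinv p = (case p of (x, y, z) \<Rightarrow> (-x, -y, -z))"

definition gnorm :: "real \<Rightarrow> heis \<Rightarrow> real" where
  "gnorm \<alpha> p = (case p of (x, y, z) \<Rightarrow> ((x^2 + y^2)^2 + 4 * \<alpha>^2 * z^2) powr (1/4))"

definition dg :: "real \<Rightarrow> heis \<Rightarrow> heis \<Rightarrow> real" where
  "dg \<alpha> p q = gnorm \<alpha> (hmult (hinv p) q)"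

definition is_distance :: "('a \<Rightarrow> 'a \<Rightarrow> real) \<Rightarrow> bool" where
  "is_distance d \<longleftrightarrow> (\<forall>p q. d p q = 0 \<longleftrightarrow> p = q) \<and> (\<forall>p q. d p q = d q p)
     \<and> (\<forall>p q r. d p r \<le> d p q + d q r)"

definition closed_ball_d :: "('a \<Rightarrow> 'a \<Rightarrow> real) \<Rightarrow> 'a \<Rightarrow> real \<Rightarrow> 'a set" where
  "closed_ball_d d c r = {q. d c q \<le> r}"

definition bounded_d :: "('a \<Rightarrow> 'a \<Rightarrow> real) \<Rightarrow> 'a set \<Rightarrow> bool" where
  "bounded_d d A \<longleftrightarrow> (\<exists>c R. \<forall>a\<in>A. d c a \<le> R)"

definition BCP :: "('a \<Rightarrow> 'a \<Rightarrow> real) \<Rightarrow> bool" where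
  "BCP d \<longleftrightarrow> (\<exists>N::nat. N \<ge> 1 \<and>
     (\<forall>A \<B>. bounded_d d A
        \<and> (\<forall>B\<in>\<B>. \<exists>c r. r > 0 \<and> B = closed_ball_d d c r)
        \<and> (\<forall>a\<in>A. \<exists>r>0. closed_ball_d d a r \<in> \<B>)
      \<longrightarrow> (\<exists>\<F>\<subseteq>\<B>. (\<forall>x\<in>A. \<exists>B\<in>\<F>. x \<in> B)
             \<and> (\<forall>x. finite {B\<in>\<F>. x \<in> B} \<and> card {B\<in>\<F>. x \<in> B} \<le> N))))"

end

theory Submission imports Defs begin

definition Pq :: "real \<Rightarrow> heis \<Rightarrow> real" where
  "Pq a p = (case p of (x, y, z) \<Rightarrow> (x^2 + y^2)^2 + 4 * a^2 * z^2)"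

lemma key:
  fixes a R r i j n T e :: real
  assumes a: "a > 0" and R: "R > 0" and r: "r > 0" and re: "r \<le> e * R" and e0: "0 < e" and e1: "e \<le> 1"
  and i0: "0 \<le> i" and ij: "i + 1 \<le> j" and jn: "j \<le> n"
  and T: "a^2 * T = (1+n^2)^2 + 1"
  and eb: "e * ((1+n^2)^2 + 4*a^2*T^2 + ((1+n^2)^2+1)*n) < 1"
  shows "Pq a (hmult (hinv (R, i*R, T*R^2)) (r, j*r, T*r^2)) > Pq a (hinv (R, i*R, T*R^2))"
proof -
  define K where "K = (1+n^2)^2"
  define A where "A = R^2*(1+i^2)"
  define B where "B = 2*R*r*(1+i*j)"
  define C where "C = r^2*(1+j^2)"
  define X where "X = A - B + C"
  define Y where "Y = T*R^2 + R*r*(j-i)/2"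
  define Z where "Z = T*r^2 - Y"
  have eq1: "Pq a (hmult (hinv (R, i*R, T*R^2)) (r, j*r, T*r^2)) = X^2 + 4*a^2*Z^2"
    unfolding Pq_def hmult_def hinv_def X_def A_def B_def C_def Z_def Y_def
    by (simp add: field_simps power2_eq_square)
  have eq2: "Pq a (hinv (R, i*R, T*R^2)) = A^2 + 4*a^2*T^2*R^4"
    unfolding Pq_def hinv_def A_def
    by (simp add: algebra_simps power2_eq_square power4_eq_xxxx)
  have j0: "j \<ge> 1" using i0 ij by linarith
  have n0: "n \<ge> 1" using j0 jn by linarith
  have T0: "T > 0"
  proof -
    have "(1 + n^2)^2 + 1 > (0::real)" using zero_le_power2[of "1+n^2"] by linarith
    hence "a^2 * T > 0" using T by simp
    thus ?thesis using a by (simp add: zero_less_mult_iff)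
  qed
  have A0: "A \<ge> 0" unfolding A_def by simp
  have C0: "C \<ge> 0" unfolding C_def by simp
  have "X^2 = A^2 - 2*A*B - 2*B*C + (B^2 + C^2 + 2*A*C)"
    unfolding X_def by (simp add: algebra_simps power2_eq_square)
  moreover have "B^2 + C^2 + 2*A*C \<ge> 0" using A0 C0 by simp
  ultimately have X2: "X^2 \<ge> A^2 - 2*A*B - 2*B*C" by linarith
  have z1: "Z^2 = Y^2 - 2*T*Y*r^2 + T^2*r^4"
    unfolding Z_def by (simp add: algebra_simps power2_eq_square power4_eq_xxxx)
  have z2: "Y^2 = T^2*R^4 + T*R^3*r*(j-i) + (R*r*(j-i)/2)^2"
    unfolding Y_def by (simp add: algebra_simps power2_eq_square power4_eq_xxxx power3_eq_cube)
  have z3: "T*Y*r^2 = T*r^2*(T*R^2 + R*r*(j-i)/2)" unfolding Y_def by simp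
  have z4: "T^2*r^4 \<ge> 0" "(R*r*(j-i)/2)^2 \<ge> 0" by simp_all
  have Z2: "Z^2 \<ge> T^2*R^4 + T*R^3*r*(j-i) - 2*T*r^2*(T*R^2 + R*r*(j-i)/2)"
    using z1 z2 z3 z4 by linarith
  have ii: "i \<le> n" using ij jn by linarith
  have sq_i: "1 + i^2 \<le> 1 + n^2" using i0 ii by (simp add: power_mono)
  have sq_j: "1 + j^2 \<le> 1 + n^2" using j0 jn by (simp add: power_mono)
  have ijn: "1 + i*j \<le> 1 + n^2" using i0 ii j0 jn
    by (simp add: mult_mono power2_eq_square)
  have K1: "(1+i^2)*(1+i*j) \<le> K" unfolding K_def power2_eq_square[of "1+n^2"]
    using sq_i ijn i0 j0 by (intro mult_mono) (auto simp: mult_nonneg_nonneg)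
  have K2: "(1+i*j)*(1+j^2) \<le> K" unfolding K_def power2_eq_square[of "1+n^2"]
    using sq_j ijn i0 j0 by (intro mult_mono) (auto simp: mult_nonneg_nonneg)
  have aT: "a^2*T = K + 1" using T K_def by simp
  have rR: "r \<le> R" using re e1 R by (smt (verit) mult_right_mono mult_left_le_one_le)
  have rr: "r^2 \<le> e*R^2"
  proof -
    have "r^2 = r*r" by (simp add: power2_eq_square)
    also have "\<dots> \<le> (e*R)*R" using re rR r by (intro mult_mono) auto
    finally show ?thesis by (simp add: power2_eq_square)
  qed
  have Rr: "R*r \<le> e*R^2"
  proof -
    have "R*r \<le> R*(e*R)" using re R by simp
    thus ?thesis by (simp add: power2_eq_square algebra_simps)
  qed
  define br where "br = -(R^2*(1+i^2)*(1+i*j)) - r^2*(1+i*j)*(1+j^2) + a^2*T*R^2*(j-i) - 2*a^2*T^2*R*r - a^2*T*r^2*(j-i)"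
  have diff: "X^2 + 4*a^2*Z^2 - (A^2 + 4*a^2*T^2*R^4) \<ge> 4*R*r*br"
  proof -
    have "X^2 + 4*a^2*Z^2 - (A^2 + 4*a^2*T^2*R^4) \<ge> (A^2 - 2*A*B - 2*B*C) + 4*a^2*(T^2*R^4 + T*R^3*r*(j-i) - 2*T*r^2*(T*R^2 + R*r*(j-i)/2)) - (A^2 + 4*a^2*T^2*R^4)"
      using X2 Z2 mult_left_mono[OF Z2, of "4*a^2"] by simp
    also have "(A^2 - 2*A*B - 2*B*C) + 4*a^2*(T^2*R^4 + T*R^3*r*(j-i) - 2*T*r^2*(T*R^2 + R*r*(j-i)/2)) - (A^2 + 4*a^2*T^2*R^4) = 4*R*r*br"
      unfolding A_def B_def C_def br_def by (simp add: field_simps power2_eq_square power4_eq_xxxx power3_eq_cube)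
    finally show ?thesis .
  qed
  have b1: "a^2*T*R^2*(j-i) - R^2*(1+i^2)*(1+i*j) \<ge> R^2"
  proof -
    have e1: "a^2*T*R^2*(j-i) = (K+1)*(R^2*(j-i))" using aT by simp
    have K0: "K+1 \<ge> 0" unfolding K_def using zero_le_power2[of "1+n^2"] by linarith
    have "R^2*(j-i) \<ge> R^2*1" using ij by (intro mult_left_mono) auto
    hence "(K+1)*(R^2*(j-i)) \<ge> (K+1)*(R^2*1)" using K0 by (rule mult_left_mono)
    hence "a^2*T*R^2*(j-i) \<ge> (K+1)*R^2" unfolding e1 by simp
    moreover have "R^2*(1+i^2)*(1+i*j) \<le> R^2*K" using mult_left_mono[OF K1, of "R^2"] by (simp add: mult.assoc)
    ultimately show ?thesis by (simp add: algebra_simps)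
  qed
  have b2: "r^2*(1+i*j)*(1+j^2) + 2*a^2*T^2*R*r + a^2*T*r^2*(j-i) < R^2"
  proof -
    have t1: "r^2*(1+i*j)*(1+j^2) \<le> e*R^2*K"
    proof -
      have "r^2*((1+i*j)*(1+j^2)) \<le> (e*R^2)*K" using rr K2 i0 j0 e0
        by (intro mult_mono) (auto simp: mult_nonneg_nonneg)
      thus ?thesis by (simp add: mult.assoc)
    qed
    have t2: "2*a^2*T^2*R*r \<le> e*R^2*(2*a^2*T^2)"
    proof -
      have "(2*a^2*T^2)*(R*r) \<le> (2*a^2*T^2)*(e*R^2)" using Rr by (intro mult_left_mono) auto
      thus ?thesis by (simp add: algebra_simps)
    qed
    have t3: "a^2*T*r^2*(j-i) \<le> e*R^2*((K+1)*n)"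
    proof -
      have eR: "e*R^2 \<ge> 0" using e0 by simp
      have ji: "j - i \<le> n" "j - i \<ge> 0" using ij jn i0 by linarith+
      have "r^2*(j-i) \<le> (e*R^2)*n" using rr ji eR by (intro mult_mono) auto
      moreover have "K+1 \<ge> 0" unfolding K_def using zero_le_power2[of "1+n^2"] by linarith
      moreover have "r^2*(j-i) \<ge> 0" using ji by simp
      ultimately have "(K+1)*(r^2*(j-i)) \<le> (K+1)*((e*R^2)*n)" by (intro mult_left_mono)
      hence "(a^2*T)*(r^2*(j-i)) \<le> (K+1)*((e*R^2)*n)" using aT by simp
      thus ?thesis by (simp add: algebra_simps)
    qed
    have "e*R^2*K + e*R^2*(2*a^2*T^2) + e*R^2*((K+1)*n) = R^2 * (e*(K + 2*a^2*T^2 + (K+1)*n))"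
      by (simp add: algebra_simps)
    also have "\<dots> < R^2 * 1"
    proof -
      have "e*(K + 2*a^2*T^2 + (K+1)*n) \<le> e*(K + 4*a^2*T^2 + (K+1)*n)"
        using e0 by (intro mult_left_mono) auto
      also have "\<dots> < 1" using eb K_def by simp
      finally show ?thesis using R by simp
    qed
    finally show ?thesis using t1 t2 t3 by simp
  qed
  have "br > 0" unfolding br_def using b1 b2 R by simp
  hence "4*R*r*br > 0" using R r by simp
  thus ?thesis unfolding eq1 eq2 using diff by linarith
qed

lemma order_lem:
  fixes a R r i j n T e :: real
  assumes a: "a > 0" and R: "R > 0" and r: "r > 0" and re: "r \<le> e * R" and e0: "0 < e" and e1: "e \<le> 1"
  and j0: "0 \<le> j" and jn: "j \<le> n"
  and eb: "e * ((1+n^2)^2 + 4*a^2*T^2 + ((1+n^2)^2+1)*n) < 1"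
  shows "Pq a (hinv (r, j*r, T*r^2)) < Pq a (hinv (R, i*R, T*R^2))"
proof -
  define K where "K = (1+n^2)^2"
  have n0: "n \<ge> 0" using j0 jn by linarith
  have eq1: "Pq a (hinv (r, j*r, T*r^2)) = r^4 * ((1+j^2)^2 + 4*a^2*T^2)"
    unfolding Pq_def hinv_def by (simp add: algebra_simps power2_eq_square power4_eq_xxxx)
  have eq2: "Pq a (hinv (R, i*R, T*R^2)) = R^4 * ((1+i^2)^2 + 4*a^2*T^2)"
    unfolding Pq_def hinv_def by (simp add: algebra_simps power2_eq_square power4_eq_xxxx)
  have "(1+j^2) \<le> 1+n^2" using j0 jn by (simp add: power_mono)
  hence jK: "(1+j^2)^2 \<le> K" unfolding K_def by (intro power_mono) auto
  have r4: "r^4 \<le> e*R^4"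
  proof -
    have "r^4 \<le> (e*R)^4" using re r by (intro power_mono) auto
    also have "\<dots> = e^4 * R^4" by (simp add: power_mult_distrib)
    also have "\<dots> \<le> e*R^4"
    proof -
      have "e^4 \<le> e^1" using e0 e1 by (intro power_decreasing) auto
      thus ?thesis using R by (intro mult_right_mono) auto
    qed
    finally show ?thesis .
  qed
  have "r^4 * ((1+j^2)^2 + 4*a^2*T^2) \<le> (e*R^4) * (K + 4*a^2*T^2)"
    using r4 jK e0 R by (intro mult_mono) auto
  also have "\<dots> = R^4 * (e * (K + 4*a^2*T^2))" by simp
  also have "\<dots> < R^4 * 1"
  proof -
    have "K*n \<ge> 0" "n \<ge> 0" using n0 unfolding K_def by simp_all
    hence "e * (K + 4*a^2*T^2) \<le> e * (K + 4*a^2*T^2 + (K+1)*n)"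
      using e0 by (intro mult_left_mono) (auto simp: algebra_simps)
    also have "\<dots> < 1" using eb K_def by simp
    finally show ?thesis using R by simp
  qed
  also have "\<dots> \<le> R^4 * ((1+i^2)^2 + 4*a^2*T^2)"
  proof -
    have "(1::real) \<le> 1 + i^2" by simp
    hence "1 \<le> (1+i^2)^2" by (simp add: one_le_power)
    hence "1 \<le> (1+i^2)^2 + 4*a^2*T^2" by (smt (verit) zero_le_power2 mult_nonneg_nonneg)
    thus ?thesis using R by (intro mult_left_mono) auto
  qed
  finally show ?thesis unfolding eq1 eq2 .
qed

lemma hinv_hmult: "hmult (hinv q) p = hinv (hmult (hinv p) q)"
  by (cases p; cases q) (simp add: hmult_def hinv_def field_simps)

lemma Pq_hinv: "Pq a (hinv p) = Pq a p"
  by (cases p) (simp add: Pq_def hinv_def)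

lemma Pq_nonneg: "Pq a p \<ge> 0"
  by (cases p) (simp add: Pq_def)

lemma gnorm_Pq: "gnorm a p = Pq a p powr (1/4)"
  by (cases p) (simp add: Pq_def gnorm_def)

lemma not_BCP_crit:
  fixes d :: "'a \<Rightarrow> 'a \<Rightarrow> real"
  assumes H: "\<And>N::nat. \<exists>x r p. (\<forall>k\<le>N. r k > 0 \<and> d (x k) p \<le> r k \<and> d (x k) (x k) \<le> r k)
      \<and> (\<forall>k\<le>N. \<forall>l\<le>N. k \<noteq> l \<longrightarrow> d (x k) (x l) > r k)"
  shows "\<not> BCP d"
proof
  assume "BCP d"
  then obtain N :: nat where P: "\<forall>A \<B>. bounded_d d A
        \<and> (\<forall>B\<in>\<B>. \<exists>c r. r > 0 \<and> B = closed_ball_d d c r)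
        \<and> (\<forall>a\<in>A. \<exists>r>0. closed_ball_d d a r \<in> \<B>)
      \<longrightarrow> (\<exists>\<F>\<subseteq>\<B>. (\<forall>x\<in>A. \<exists>B\<in>\<F>. x \<in> B)
             \<and> (\<forall>x. finite {B\<in>\<F>. x \<in> B} \<and> card {B\<in>\<F>. x \<in> B} \<le> N))"
    unfolding BCP_def by blast
  obtain x r p where H1: "\<forall>k\<le>N. r k > 0 \<and> d (x k) p \<le> r k \<and> d (x k) (x k) \<le> r k"
    and H2: "\<forall>k\<le>N. \<forall>l\<le>N. k \<noteq> l \<longrightarrow> d (x k) (x l) > r k"
    using H[of N] by blast
  define ball where "ball k = closed_ball_d d (x k) (r k)" for k
  define A where "A = x ` {..N}"
  define BB where "BB = ball ` {..N}"
  have bdd: "bounded_d d A"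
    unfolding bounded_d_def A_def
  proof (intro exI ballI)
    fix a assume "a \<in> x ` {..N}"
    then obtain k where "k \<le> N" "a = x k" by auto
    thus "d (x 0) a \<le> Max ((\<lambda>k. d (x 0) (x k)) ` {..N})"
      by (intro Max_ge) auto
  qed
  have b1: "\<forall>B\<in>BB. \<exists>c r. r > 0 \<and> B = closed_ball_d d c r"
    unfolding BB_def ball_def using H1 by auto
  have b2: "\<forall>a\<in>A. \<exists>r>0. closed_ball_d d a r \<in> BB"
    unfolding BB_def A_def ball_def using H1 by auto
  obtain F where F: "F \<subseteq> BB" and cov: "\<forall>y\<in>A. \<exists>B\<in>F. y \<in> B"
    and fc: "\<forall>y. finite {B\<in>F. y \<in> B} \<and> card {B\<in>F. y \<in> B} \<le> N"
  proof -
    have "\<exists>F\<subseteq>BB. (\<forall>y\<in>A. \<exists>B\<in>F. y \<in> B)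
             \<and> (\<forall>y. finite {B\<in>F. y \<in> B} \<and> card {B\<in>F. y \<in> B} \<le> N)"
      using mp[OF spec[OF spec[OF P, of A], of BB] conjI[OF bdd conjI[OF b1 b2]]] .
    thus ?thesis using that by blast
  qed
  have mem: "k = l" if "k \<le> N" "l \<le> N" "x k \<in> ball l" for k l
  proof (rule ccontr)
    assume "k \<noteq> l"
    hence "d (x l) (x k) > r l" using H2 that(1,2) by blast
    moreover have "d (x l) (x k) \<le> r l" using that(3) unfolding ball_def closed_ball_d_def by simp
    ultimately show False by simp
  qed
  have inF: "ball k \<in> F" if "k \<le> N" for k
  proof -
    have "x k \<in> A" unfolding A_def using that by auto
    then obtain B where "B \<in> F" "x k \<in> B" using cov by blast
    then obtain l where "l \<le> N" "B = ball l" using F unfolding BB_def by auto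
    thus ?thesis using mem[of k l] that \<open>x k \<in> B\<close> \<open>B \<in> F\<close> by auto
  qed
  have sub: "ball ` {..N} \<subseteq> {B\<in>F. p \<in> B}"
    using inF H1 unfolding ball_def closed_ball_d_def by auto
  have inj: "inj_on ball {..N}"
  proof (rule inj_onI)
    fix k l assume "k \<in> {..N}" "l \<in> {..N}" "ball k = ball l"
    moreover have "x k \<in> ball k" using H1 \<open>k \<in> {..N}\<close> unfolding ball_def closed_ball_d_def by auto
    ultimately show "k = l" using mem by auto
  qed
  have "Suc N = card (ball ` {..N})" using inj by (simp add: card_image)
  also have "\<dots> \<le> card {B\<in>F. p \<in> B}" using sub fc by (intro card_mono) auto
  also have "\<dots> \<le> N" using fc by auto
  finally show False by simp
qed

lemma dg_not_BCP:
  fixes a :: real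
  assumes a: "a > 0"
  shows "\<not> BCP (dg a)"
proof (rule not_BCP_crit)
  fix N :: nat
  define n where "n = real N"
  define K where "K = (1+n^2)^2"
  define T where "T = (K+1)/a^2"
  define M where "M = K + 4*a^2*T^2 + (K+1)*n + 1"
  define e where "e = 1/M"
  define x where "x k = (e^k, real k * e^k, T*(e^k)^2)" for k :: nat
  define r where "r k = dg a (x k) (0,0,0)" for k
  have n0: "n \<ge> 0" unfolding n_def by simp
  have K0: "K \<ge> 0" unfolding K_def by simp
  have M1: "M \<ge> 1" unfolding M_def using n0 K0 by (simp add: mult_nonneg_nonneg)
  have e0: "e > 0" unfolding e_def using M1 by simp
  have e1: "e \<le> 1" unfolding e_def using M1 by simp
  have aT: "a^2 * T = (1+n^2)^2 + 1" unfolding T_def K_def using a by simp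
  have eb: "e * ((1+n^2)^2 + 4*a^2*T^2 + ((1+n^2)^2+1)*n) < 1"
  proof -
    have "e * ((1+n^2)^2 + 4*a^2*T^2 + ((1+n^2)^2+1)*n) = (M - 1)/M"
      unfolding e_def M_def K_def by simp
    also have "\<dots> < 1" using M1 by simp
    finally show ?thesis .
  qed
  have hm0: "hmult q (0,0,0) = q" for q by (cases q) (simp add: hmult_def)
  have hmi: "hmult (hinv q) q = (0,0,0)" for q by (cases q) (simp add: hmult_def hinv_def)
  have Ppos: "Pq a (hinv (x k)) > 0" for k
    unfolding x_def Pq_def hinv_def using e0 by (simp add: add_pos_nonneg)
  have pair: "Pq a (hmult (hinv (x k)) (x l)) > Pq a (hinv (x k)) \<and> Pq a (hinv (x l)) < Pq a (hinv (x k))"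
    if kl: "k < l" "l \<le> N" for k l
  proof -
    have r1: "e^l \<le> e * e^k"
    proof -
      have "e^l \<le> e^(Suc k)" using kl e0 e1 by (intro power_decreasing) auto
      thus ?thesis by simp
    qed
    have ij: "real k + 1 \<le> real l" using kl by simp
    have jn: "real l \<le> n" unfolding n_def using kl by simp
    have "Pq a (hmult (hinv (e^k, real k * e^k, T*(e^k)^2)) (e^l, real l * e^l, T*(e^l)^2))
          > Pq a (hinv (e^k, real k * e^k, T*(e^k)^2))"
      by (rule key[OF a _ _ r1 e0 e1 _ ij jn aT eb]) (use e0 in auto)
    moreover have "Pq a (hinv (e^l, real l * e^l, T*(e^l)^2)) < Pq a (hinv (e^k, real k * e^k, T*(e^k)^2))"
      by (rule order_lem[OF a _ _ r1 e0 e1 _ jn eb]) (use e0 in auto)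
    ultimately show ?thesis unfolding x_def by simp
  qed
  show "\<exists>x r p. (\<forall>k\<le>N. r k > 0 \<and> dg a (x k) p \<le> r k \<and> dg a (x k) (x k) \<le> r k)
      \<and> (\<forall>k\<le>N. \<forall>l\<le>N. k \<noteq> l \<longrightarrow> dg a (x k) (x l) > r k)"
  proof (intro exI conjI allI impI)
    fix k assume "k \<le> N"
    show "r k > 0" unfolding r_def dg_def gnorm_Pq hm0 using Ppos[of k] by simp
    show "dg a (x k) (0,0,0) \<le> r k" unfolding r_def by simp
    show "dg a (x k) (x k) \<le> r k" unfolding r_def dg_def gnorm_Pq hm0 hmi
      using Pq_nonneg by (simp add: Pq_def)
  next
    fix k l assume kN: "k \<le> N" and lN: "l \<le> N" and kl: "k \<noteq> l"
    have "Pq a (hmult (hinv (x k)) (x l)) > Pq a (hinv (x k))"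
    proof (cases "k < l")
      case True thus ?thesis using pair lN by blast
    next
      case False
      hence "l < k" using kl by simp
      hence "Pq a (hmult (hinv (x l)) (x k)) > Pq a (hinv (x l))" "Pq a (hinv (x k)) < Pq a (hinv (x l))"
        using pair kN by blast+
      moreover have "Pq a (hmult (hinv (x k)) (x l)) = Pq a (hmult (hinv (x l)) (x k))"
        by (subst hinv_hmult) (simp add: Pq_hinv)
      ultimately show ?thesis by simp
    qed
    thus "dg a (x k) (x l) > r k"
      unfolding r_def dg_def gnorm_Pq hm0
      by (intro powr_less_mono2) (auto simp: Pq_hinv Pq_nonneg)
  qed
qed

theorem mainTheorem6:
  shows "(\<forall>\<alpha>::real. \<alpha> > 0 \<and> is_distance (dg \<alpha>) \<longrightarrow> \<not> BCP (dg \<alpha>))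
         \<and> \<not> BCP (dg 2)"
  using dg_not_BCP by auto

end
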